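(* Let $\mathcal{G}=(\mathcal{V},\mathcal{E})$ be a connected time-invariant undirected graph on $\mathcal{V}=\{1,\dots,n\}$ with a fixed doubly stochastic weight matrix $\mathbf{W}=[w_{ij}]$ satisfying the standing weight conventions. Suppose each agent $i$ has initial state $\mu_i(0)\in\mathfrak{U}_2(\mathbb{R})$ and updates by $\mu_i(t+1)=\operatorname{argmin}_{\eta\in\mathfrak{U}_2(\mathbb{R})}\sum_{j\in\mathcal{N}_i}w_{ij}\ell_2(\eta,\mu_j(t))^2$. Then for every $i\in\mathcal{V}$, $\ell_2(\mu_i(t),\mu^\ast)\to0$ at an exponential rate, where $\mu^\ast=\operatorname{argmin}_{\eta\in\mathfrak{U}_2(\mathbb{R})}\frac1n\sum_{j\in\mathcal{V}}\ell_2(\eta,\mu_j(0))^2$.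
   Context: $\mathfrak{U}_2(\mathbb{R})$ is the set of Borel probability measures on $\mathbb{R}$ with finite second moment; $\ell_2$ is the 2-Wasserstein distance $\ell_2(\mu,\nu)=\big(\inf_{\gamma\in\Gamma(\mu,\nu)}\int|x-y|^2d\gamma\big)^{1/2}$ over couplings. $\mathcal{N}_i=\{j:(i,j)\in\mathcal{E}\}$ contains $i$; $w_{ij}>0$ iff $j\in\mathcal{N}_i$, $w_{ij}=0$ otherwise, $w_{ii}>0$; doubly stochastic means all row and column sums equal $1$. Exponential rate means there exist $C>0$, $\rho\in(0,1)$ with $\ell_2(\mu_i(t),\mu^\ast)\le C\rho^t$. *)

theory Defs
  imports "HOL-Probability.Probability"
begin

definition U2 :: "real measure set" where
  "U2 = {M. prob_space M \<and> sets M = sets borel \<and> integrable M (\<lambda>x. x ^ 2)}"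

definition couplings :: "real measure \<Rightarrow> real measure \<Rightarrow> (real \<times> real) measure set" where
  "couplings \<mu> \<nu> = {\<gamma>. sets \<gamma> = sets (borel \<Otimes>\<^sub>M borel) \<and>
       distr \<gamma> borel fst = \<mu> \<and> distr \<gamma> borel snd = \<nu>}"

definition W2 :: "real measure \<Rightarrow> real measure \<Rightarrow> real" where
  "W2 \<mu> \<nu> = sqrt (enn2real (INF \<gamma>\<in>couplings \<mu> \<nu>.
       \<integral>\<^sup>+ p. ennreal ((fst p - snd p) ^ 2) \<partial>\<gamma>))"

definition is_argmin_U2 :: "(real measure \<Rightarrow> real) \<Rightarrow> real measure \<Rightarrow> bool" where
  "is_argmin_U2 F \<eta> \<longleftrightarrow> \<eta> \<in> U2 \<and> (\<forall>\<xi>\<in>U2. F \<eta> \<le> F \<xi>)"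

end

theory Submission
  imports Defs
begin


lemma tri_integral:
  fixes a b :: real assumes "a \<le> b"
  shows "(\<integral>\<^sup>+ s. indicator {a..b} s * ennreal (b - s) \<partial>lborel) = ennreal ((b-a)^2/2)"
proof -
  have d: "\<And>s. ((\<lambda>s. -((b - s)^2)/2) has_real_derivative (b - s)) (at s within {a..b})"
    by (auto intro!: derivative_eq_intros simp: power2_eq_square field_simps)
  have "((\<lambda>s. b - s) has_integral ((-((b - b)^2)/2) - (-((b - a)^2)/2))) {a..b}"
    using fundamental_theorem_of_calculus[OF assms, of "\<lambda>s. -((b - s)^2)/2" "\<lambda>s. b - s"] d
    by (simp add: has_real_derivative_iff_has_vector_derivative)
  hence "((\<lambda>s. b - s) has_integral ((b-a)^2/2)) {a..b}" by simp
  have "((\<lambda>s. indicator {a..b} s * (b - s)) has_integral ((b-a)^2/2)) UNIV"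
  proof -
    have "(\<lambda>s. indicator {a..b} s * (b - s)) = (\<lambda>s. if s \<in> {a..b} then b - s else 0)"
      by (auto simp: indicator_def)
    thus ?thesis using \<open>((\<lambda>s. b - s) has_integral ((b-a)^2/2)) {a..b}\<close>
      by (simp only: has_integral_restrict_UNIV)
  qed
  hence "integral\<^sup>N lborel (\<lambda>s. indicator {a..b} s * (b - s)) = (b-a)^2/2"
    by (intro nn_integral_has_integral_lborel) (auto simp: indicator_def)
  moreover have "integral\<^sup>N lborel (\<lambda>s. indicator {a..b} s * (b - s)) =
      (\<integral>\<^sup>+ s. indicator {a..b} s * ennreal (b - s) \<partial>lborel)"
    by (intro nn_integral_cong) (auto simp: indicator_def)
  ultimately show ?thesis by simp
qed

lemma two_half_ennreal: "0 \<le> (a::real) \<Longrightarrow> 2 * ennreal (a/2) = ennreal a"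
proof -
  assume a: "0 \<le> a"
  have "2 * ennreal (a/2) = ennreal 2 * ennreal (a/2)" by simp
  also have "\<dots> = ennreal (2 * (a/2))" using a by (subst ennreal_mult) auto
  finally show ?thesis by simp
qed

definition hh :: "real \<Rightarrow> real \<Rightarrow> real \<Rightarrow> real \<Rightarrow> ennreal" where
  "hh x y s r = (if s < r \<and> x \<le> s \<and> r < y then 1 else 0) + (if s < r \<and> y \<le> s \<and> r < x then 1 else 0)"

lemma inner1:
  "(\<integral>\<^sup>+ r. (if s < r \<and> x \<le> s \<and> r < y then 1 else 0) \<partial>lborel) =
     (if x \<le> s \<and> s \<le> y then ennreal (y - s) else (0::ennreal))"
proof (cases "x \<le> s")
  case True
  have "(\<integral>\<^sup>+ r. (if s < r \<and> x \<le> s \<and> r < y then 1 else 0) \<partial>lborel) =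
        (\<integral>\<^sup>+ r. indicator {s<..<y} r \<partial>lborel)"
    using True by (intro nn_integral_cong) (auto simp: indicator_def)
  also have "\<dots> = emeasure lborel {s<..<y}" by simp
  also have "\<dots> = (if x \<le> s \<and> s \<le> y then ennreal (y - s) else 0)"
    using True by auto
  finally show ?thesis .
qed simp

lemma outer1:
  "(\<integral>\<^sup>+ s. (if x \<le> s \<and> s \<le> y then ennreal (y - s) else 0) \<partial>lborel) =
     (if x \<le> y then ennreal ((y - x)^2/2) else 0)"
proof (cases "x \<le> y")
  case True
  have "(\<integral>\<^sup>+ s. (if x \<le> s \<and> s \<le> y then ennreal (y - s) else 0) \<partial>lborel) =
        (\<integral>\<^sup>+ s. indicator {x..y} s * ennreal (y - s) \<partial>lborel)"
    by (intro nn_integral_cong) (auto simp: indicator_def)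
  also have "\<dots> = ennreal ((y - x)^2/2)" using tri_integral[OF True] .
  finally show ?thesis using True by simp
next
  case False
  hence "(\<lambda>s. if x \<le> s \<and> s \<le> y then ennreal (y - s) else 0) = (\<lambda>s. 0)" by auto
  thus ?thesis using False by simp
qed

lemma hh_integral:
  "ennreal ((x - y)^2) = 2 * (\<integral>\<^sup>+ s. (\<integral>\<^sup>+ r. hh x y s r \<partial>lborel) \<partial>lborel)"
proof -
  have "\<And>s. (\<integral>\<^sup>+ r. hh x y s r \<partial>lborel) =
     (if x \<le> s \<and> s \<le> y then ennreal (y - s) else 0) + (if y \<le> s \<and> s \<le> x then ennreal (x - s) else 0)"
    unfolding hh_def
    by (subst nn_integral_add) (auto simp: inner1)
  hence "(\<integral>\<^sup>+ s. (\<integral>\<^sup>+ r. hh x y s r \<partial>lborel) \<partial>lborel) =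
     (\<integral>\<^sup>+ s. (if x \<le> s \<and> s \<le> y then ennreal (y - s) else 0) + (if y \<le> s \<and> s \<le> x then ennreal (x - s) else 0) \<partial>lborel)"
    by simp
  also have "\<dots> = (if x \<le> y then ennreal ((y - x)^2/2) else 0) + (if y \<le> x then ennreal ((x - y)^2/2) else 0)"
    by (subst nn_integral_add) (auto simp: outer1)
  finally have e: "(\<integral>\<^sup>+ s. (\<integral>\<^sup>+ r. hh x y s r \<partial>lborel) \<partial>lborel) =
      (if x \<le> y then ennreal ((y - x)^2/2) else 0) + (if y \<le> x then ennreal ((x - y)^2/2) else 0)" .
  show ?thesis
  proof (cases "x = y")
    case True thus ?thesis using e by simp
  next
    case False
    have "(x - y)^2 = (y - x)^2" by (simp add: power2_commute)
    thus ?thesis using False unfolding e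
      by (auto simp: two_half_ennreal)
  qed
qed

lemma cost_layer:
  fixes \<gamma> :: "(real \<times> real) measure"
  assumes P: "prob_space \<gamma>" and S: "sets \<gamma> = sets (borel \<Otimes>\<^sub>M borel)"
  shows "(\<integral>\<^sup>+ p. ennreal ((fst p - snd p)^2) \<partial>\<gamma>) =
    2 * (\<integral>\<^sup>+ s. (\<integral>\<^sup>+ r. (if s < r then emeasure \<gamma> {p. fst p \<le> s \<and> r < snd p}
              + emeasure \<gamma> {p. snd p \<le> s \<and> r < fst p} else 0) \<partial>lborel) \<partial>lborel)"
proof -
  interpret prob_space \<gamma> by (rule P)
  interpret PS: pair_sigma_finite lborel \<gamma>
    by (simp add: pair_sigma_finite_def lborel.sigma_finite_measure_axioms sigma_finite_measure_axioms)
  have sp: "space \<gamma> = UNIV" using sets_eq_imp_space_eq[OF S] by (simp add: space_pair_measure)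
  have mg: "measurable (lborel \<Otimes>\<^sub>M \<gamma>) = measurable (lborel \<Otimes>\<^sub>M (borel \<Otimes>\<^sub>M borel))"
    by (intro ext measurable_cong_sets sets_pair_measure_cong) (auto simp: S)
  have mg2: "measurable ((lborel \<Otimes>\<^sub>M \<gamma>) \<Otimes>\<^sub>M lborel) = measurable ((lborel \<Otimes>\<^sub>M (borel \<Otimes>\<^sub>M borel)) \<Otimes>\<^sub>M lborel)"
    by (intro ext measurable_cong_sets sets_pair_measure_cong) (auto simp: S)
  have mg1: "measurable \<gamma> = measurable (borel \<Otimes>\<^sub>M borel)"
    by (intro ext measurable_cong_sets) (auto simp: S)
  have hm: "(\<lambda>x. hh (fst (snd (fst x))) (snd (snd (fst x))) (fst (fst x)) (snd x)) \<in> borel_measurable ((lborel \<Otimes>\<^sub>M \<gamma>) \<Otimes>\<^sub>M lborel)"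
    unfolding mg2 hh_def by measurable
  have G: "(\<lambda>(s,p). \<integral>\<^sup>+ r. hh (fst p) (snd p) s r \<partial>lborel) \<in> borel_measurable (lborel \<Otimes>\<^sub>M \<gamma>)"
    using lborel.borel_measurable_nn_integral[of "\<lambda>sp r. hh (fst (snd sp)) (snd (snd sp)) (fst sp) r"] hm
    by (simp add: split_beta')
  have mg3: "measurable ((\<gamma> \<Otimes>\<^sub>M lborel) \<Otimes>\<^sub>M lborel) = measurable (((borel \<Otimes>\<^sub>M borel) \<Otimes>\<^sub>M lborel) \<Otimes>\<^sub>M lborel)"
    by (intro ext measurable_cong_sets sets_pair_measure_cong) (auto simp: S)
  have hm': "(\<lambda>x. hh (fst (fst (fst x))) (snd (fst (fst x))) (snd (fst x)) (snd x)) \<in> borel_measurable ((\<gamma> \<Otimes>\<^sub>M lborel) \<Otimes>\<^sub>M lborel)"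
    unfolding mg3 hh_def by measurable
  have G': "(\<lambda>x. \<integral>\<^sup>+ r. hh (fst (fst x)) (snd (fst x)) (snd x) r \<partial>lborel) \<in> borel_measurable (\<gamma> \<Otimes>\<^sub>M lborel)"
    using lborel.borel_measurable_nn_integral[of "\<lambda>sp r. hh (fst (fst sp)) (snd (fst sp)) (snd sp) r"] hm'
    by (simp add: split_beta')
  have G'': "(\<lambda>p. \<integral>\<^sup>+ s. (\<integral>\<^sup>+ r. hh (fst p) (snd p) s r \<partial>lborel) \<partial>lborel) \<in> borel_measurable \<gamma>"
    using lborel.borel_measurable_nn_integral[of "\<lambda>p s. \<integral>\<^sup>+ r. hh (fst p) (snd p) s r \<partial>lborel"] G'
    by (simp add: split_beta')
  have "(\<integral>\<^sup>+ p. ennreal ((fst p - snd p)^2) \<partial>\<gamma>) =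
      (\<integral>\<^sup>+ p. 2 * (\<integral>\<^sup>+ s. (\<integral>\<^sup>+ r. hh (fst p) (snd p) s r \<partial>lborel) \<partial>lborel) \<partial>\<gamma>)"
    by (intro nn_integral_cong) (simp add: hh_integral)
  also have "\<dots> = 2 * (\<integral>\<^sup>+ p. (\<integral>\<^sup>+ s. (\<integral>\<^sup>+ r. hh (fst p) (snd p) s r \<partial>lborel) \<partial>lborel) \<partial>\<gamma>)"
    by (rule nn_integral_cmult) (rule G'')
  also have "(\<integral>\<^sup>+ p. (\<integral>\<^sup>+ s. (\<integral>\<^sup>+ r. hh (fst p) (snd p) s r \<partial>lborel) \<partial>lborel) \<partial>\<gamma>) =
     (\<integral>\<^sup>+ s. (\<integral>\<^sup>+ p. (\<integral>\<^sup>+ r. hh (fst p) (snd p) s r \<partial>lborel) \<partial>\<gamma>) \<partial>lborel)"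
    by (rule PS.Fubini'[of "\<lambda>s p. \<integral>\<^sup>+ r. hh (fst p) (snd p) s r \<partial>lborel"]) (use G in simp)
  also have "\<dots> = (\<integral>\<^sup>+ s. (\<integral>\<^sup>+ r. (\<integral>\<^sup>+ p. hh (fst p) (snd p) s r \<partial>\<gamma>) \<partial>lborel) \<partial>lborel)"
  proof (intro nn_integral_cong)
    fix s :: real
    have m: "(\<lambda>(r, p). hh (fst p) (snd p) s r) \<in> borel_measurable (lborel \<Otimes>\<^sub>M \<gamma>)"
      unfolding mg hh_def by measurable
    show "(\<integral>\<^sup>+ p. (\<integral>\<^sup>+ r. hh (fst p) (snd p) s r \<partial>lborel) \<partial>\<gamma>) = (\<integral>\<^sup>+ r. (\<integral>\<^sup>+ p. hh (fst p) (snd p) s r \<partial>\<gamma>) \<partial>lborel)"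
      by (rule PS.Fubini'[of "\<lambda>r p. hh (fst p) (snd p) s r"]) (use m in simp)
  qed
  also have "\<dots> = (\<integral>\<^sup>+ s. (\<integral>\<^sup>+ r. (if s < r then emeasure \<gamma> {p. fst p \<le> s \<and> r < snd p}
              + emeasure \<gamma> {p. snd p \<le> s \<and> r < fst p} else 0) \<partial>lborel) \<partial>lborel)"
  proof (intro nn_integral_cong)
    fix s r :: real
    have "{p. fst p \<le> s \<and> r < snd p} = {..s} \<times> {r<..}" by auto
    hence s1: "{p. fst p \<le> s \<and> r < snd p} \<in> sets \<gamma>" unfolding S by (simp add: pair_measureI)
    have "{p. snd p \<le> s \<and> r < fst p} = {r<..} \<times> {..s}" by auto
    hence s2: "{p. snd p \<le> s \<and> r < fst p} \<in> sets \<gamma>" unfolding S by (simp add: pair_measureI)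
    have "(\<integral>\<^sup>+ p. hh (fst p) (snd p) s r \<partial>\<gamma>) =
       (\<integral>\<^sup>+ p. indicator {p. s < r \<and> fst p \<le> s \<and> r < snd p} p + indicator {p. s < r \<and> snd p \<le> s \<and> r < fst p} p \<partial>\<gamma>)"
      by (intro nn_integral_cong) (auto simp: hh_def indicator_def)
    also have "\<dots> = (\<integral>\<^sup>+ p. indicator {p. s < r \<and> fst p \<le> s \<and> r < snd p} p \<partial>\<gamma>) + (\<integral>\<^sup>+ p. indicator {p. s < r \<and> snd p \<le> s \<and> r < fst p} p \<partial>\<gamma>)"
      by (intro nn_integral_add) (auto simp: mg1)
    also have "\<dots> = (if s < r then emeasure \<gamma> {p. fst p \<le> s \<and> r < snd p}
              + emeasure \<gamma> {p. snd p \<le> s \<and> r < fst p} else 0)"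
      using s1 s2 by (cases "s < r") auto
    finally show "(\<integral>\<^sup>+ p. hh (fst p) (snd p) s r \<partial>\<gamma>) = (if s < r then emeasure \<gamma> {p. fst p \<le> s \<and> r < snd p}
              + emeasure \<gamma> {p. snd p \<le> s \<and> r < fst p} else 0)" .
  qed
  finally show ?thesis by simp
qed

definition Om :: "real measure" where "Om = restrict_space lborel {0<..<1}"

lemma space_Om: "space Om = {0<..<1}"
  by (simp add: Om_def space_restrict_space)

lemma prob_Om: "prob_space Om"
  unfolding Om_def
  by (auto simp add: emeasure_restrict_space space_restrict_space intro!: prob_spaceI)

lemma mono_meas_Om: fixes f :: "real \<Rightarrow> real" shows "mono_on {0<..<1} f \<Longrightarrow> f \<in> borel_measurable Om"
  using borel_measurable_mono_on_fnc[of "{0<..<1}" f]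
  unfolding Om_def
  by (subst measurable_cong_sets[OF sets_restrict_space_cong[OF sets_lborel] refl]) simp

lemma coupling_prob:
  assumes "\<gamma> \<in> couplings \<mu> \<nu>" "prob_space \<mu>"
  shows "prob_space \<gamma>"
proof -
  have S: "sets \<gamma> = sets (borel \<Otimes>\<^sub>M borel)" and D: "distr \<gamma> borel fst = \<mu>"
    using assms(1) by (auto simp: couplings_def)
  have sp: "space \<gamma> = UNIV" using sets_eq_imp_space_eq[OF S] by (simp add: space_pair_measure)
  have m: "fst \<in> measurable \<gamma> borel"
    by (subst measurable_cong_sets[OF S refl]) simp
  have "emeasure \<gamma> (space \<gamma>) = emeasure (distr \<gamma> borel fst) UNIV"
    using m by (simp add: emeasure_distr sp)
  also have "\<dots> = 1" using D assms(2) prob_space.emeasure_space_1[OF assms(2)]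
    by (metis prob_space.prob_space_distr sets_eq_imp_space_eq sets_distr space_borel m)
  finally show ?thesis by (intro prob_spaceI)
qed

lemma coupling_lb:
  assumes "\<gamma> \<in> couplings \<mu> \<nu>" "prob_space \<mu>"
  shows "emeasure \<mu> {..s} - emeasure \<nu> {..r} \<le> emeasure \<gamma> {p. fst p \<le> s \<and> r < snd p}"
proof -
  have S: "sets \<gamma> = sets (borel \<Otimes>\<^sub>M borel)" and D1: "distr \<gamma> borel fst = \<mu>"
    and D2: "distr \<gamma> borel snd = \<nu>"
    using assms(1) by (auto simp: couplings_def)
  have sp: "space \<gamma> = UNIV" using sets_eq_imp_space_eq[OF S] by (simp add: space_pair_measure)
  have m1: "fst \<in> measurable \<gamma> borel" by (subst measurable_cong_sets[OF S refl]) simp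
  have m2: "snd \<in> measurable \<gamma> borel" by (subst measurable_cong_sets[OF S refl]) simp
  have e1: "emeasure \<mu> {..s} = emeasure \<gamma> {p. fst p \<le> s}"
    unfolding D1[symmetric] using m1 by (simp add: emeasure_distr sp vimage_def)
  have e2: "emeasure \<nu> {..r} = emeasure \<gamma> {p. snd p \<le> r}"
    unfolding D2[symmetric] using m2 by (simp add: emeasure_distr sp vimage_def)
  have "{p. fst p \<le> s \<and> r < snd p} = {..s} \<times> {r<..}" by auto
  hence A: "{p. fst p \<le> s \<and> r < snd p} \<in> sets \<gamma>" unfolding S by (simp add: pair_measureI)
  have "{p::real\<times>real. snd p \<le> r} = UNIV \<times> {..r}" by auto
  hence B: "{p. snd p \<le> r} \<in> sets \<gamma>" unfolding S by (simp add: pair_measureI)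
  have "emeasure \<gamma> {p. fst p \<le> s} \<le> emeasure \<gamma> ({p. fst p \<le> s \<and> r < snd p} \<union> {p. snd p \<le> r})"
    by (intro emeasure_mono) (auto simp: A B)
  also have "\<dots> \<le> emeasure \<gamma> {p. snd p \<le> r} + emeasure \<gamma> {p. fst p \<le> s \<and> r < snd p}"
    using emeasure_subadditive[OF A B] by (simp add: add.commute)
  moreover have "emeasure \<gamma> {p. fst p \<le> s} \<noteq> \<top>"
    using finite_measure.emeasure_finite[OF prob_space.finite_measure[OF coupling_prob[OF assms]]] by simp
  ultimately show ?thesis unfolding e1 e2 by (simp add: ennreal_minus_le_iff)
qed

lemma coupling_lb2:
  assumes "\<gamma> \<in> couplings \<mu> \<nu>" "prob_space \<mu>"
  shows "emeasure \<nu> {..s} - emeasure \<mu> {..r} \<le> emeasure \<gamma> {p. snd p \<le> s \<and> r < fst p}"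
proof -
  have S: "sets \<gamma> = sets (borel \<Otimes>\<^sub>M borel)" and D1: "distr \<gamma> borel fst = \<mu>"
    and D2: "distr \<gamma> borel snd = \<nu>"
    using assms(1) by (auto simp: couplings_def)
  have sp: "space \<gamma> = UNIV" using sets_eq_imp_space_eq[OF S] by (simp add: space_pair_measure)
  have m1: "fst \<in> measurable \<gamma> borel" by (subst measurable_cong_sets[OF S refl]) simp
  have m2: "snd \<in> measurable \<gamma> borel" by (subst measurable_cong_sets[OF S refl]) simp
  have e1: "emeasure \<nu> {..s} = emeasure \<gamma> {p. snd p \<le> s}"
    unfolding D2[symmetric] using m2 by (simp add: emeasure_distr sp vimage_def)
  have e2: "emeasure \<mu> {..r} = emeasure \<gamma> {p. fst p \<le> r}"
    unfolding D1[symmetric] using m1 by (simp add: emeasure_distr sp vimage_def)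
  have "{p. snd p \<le> s \<and> r < fst p} = {r<..} \<times> {..s}" by auto
  hence A: "{p. snd p \<le> s \<and> r < fst p} \<in> sets \<gamma>" unfolding S by (simp add: pair_measureI)
  have "{p::real\<times>real. fst p \<le> r} = {..r} \<times> UNIV" by auto
  hence B: "{p. fst p \<le> r} \<in> sets \<gamma>" unfolding S by (simp add: pair_measureI)
  have "emeasure \<gamma> {p. snd p \<le> s} \<le> emeasure \<gamma> ({p. snd p \<le> s \<and> r < fst p} \<union> {p. fst p \<le> r})"
    by (intro emeasure_mono) (auto simp: A B)
  also have "\<dots> \<le> emeasure \<gamma> {p. fst p \<le> r} + emeasure \<gamma> {p. snd p \<le> s \<and> r < fst p}"
    using emeasure_subadditive[OF A B] by (simp add: add.commute)
  moreover have "emeasure \<gamma> {p. snd p \<le> s} \<noteq> \<top>"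
    using finite_measure.emeasure_finite[OF prob_space.finite_measure[OF coupling_prob[OF assms]]] by simp
  ultimately show ?thesis unfolding e1 e2 by (simp add: ennreal_minus_le_iff)
qed

lemma Om_core:
  fixes a b :: "real \<Rightarrow> real"
  assumes ma: "mono_on {0<..<1} a" and mb: "mono_on {0<..<1} b"
  shows "emeasure Om {u\<in>space Om. a u \<le> s \<and> r < b u} =
         emeasure Om {u\<in>space Om. a u \<le> s} - emeasure Om {u\<in>space Om. b u \<le> r}"
proof -
  interpret prob_space Om by (rule prob_Om)
  define D1 where "D1 = {u\<in>space Om. a u \<le> s}"
  define D2 where "D2 = {u\<in>space Om. b u \<le> r}"
  have m1: "D1 \<in> sets Om" unfolding D1_def using mono_meas_Om[OF ma] by measurable
  have m2: "D2 \<in> sets Om" unfolding D2_def using mono_meas_Om[OF mb] by measurable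
  have eq: "{u\<in>space Om. a u \<le> s \<and> r < b u} = D1 - D2" by (auto simp: D1_def D2_def)
  have nest: "D1 \<subseteq> D2 \<or> D2 \<subseteq> D1"
  proof (rule ccontr)
    assume "\<not> (D1 \<subseteq> D2 \<or> D2 \<subseteq> D1)"
    then obtain u v where u: "u \<in> D1" "u \<notin> D2" and v: "v \<in> D2" "v \<notin> D1" by auto
    have uv: "u \<in> {0<..<1}" "v \<in> {0<..<1}" using u v by (auto simp: D1_def D2_def space_Om)
    show False
    proof (cases "u \<le> v")
      case True
      have "b u \<le> b v" using mono_onD[OF mb uv True] .
      thus False using u v by (auto simp: D1_def D2_def)
    next
      case False
      have "a v \<le> a u" using mono_onD[OF ma uv(2) uv(1)] False by simp
      thus False using u v by (auto simp: D1_def D2_def)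
    qed
  qed
  show ?thesis
    unfolding eq D1_def[symmetric] D2_def[symmetric]
  proof (cases "D1 \<subseteq> D2")
    case True
    have le12: "emeasure Om D1 \<le> emeasure Om D2" using True m2 by (rule emeasure_mono)
    moreover have lt: "emeasure Om D1 < top" using emeasure_le_1[of D1] ennreal_one_less_top by (rule le_less_trans)
    ultimately show "emeasure Om (D1 - D2) = emeasure Om D1 - emeasure Om D2"
    proof -
      have e0: "D1 - D2 = {}" using True by auto
      have "emeasure Om D1 - emeasure Om D2 = 0"
        using le12 lt by (simp add: diff_eq_0_iff_ennreal)
      thus ?thesis by (simp add: e0)
    qed
  next
    case False
    hence "D2 \<subseteq> D1" using nest by auto
    thus "emeasure Om (D1 - D2) = emeasure Om D1 - emeasure Om D2"
      using m1 m2 by (intro emeasure_Diff) auto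
  qed
qed

lemma set1: "{p::real\<times>real. fst p \<le> s \<and> r < snd p} \<in> sets (borel \<Otimes>\<^sub>M borel)"
proof -
  have "{p::real\<times>real. fst p \<le> s \<and> r < snd p} = {..s} \<times> {r<..}" by auto
  thus ?thesis by (simp add: pair_measureI)
qed

lemma set2: "{p::real\<times>real. snd p \<le> s \<and> r < fst p} \<in> sets (borel \<Otimes>\<^sub>M borel)"
proof -
  have "{p::real\<times>real. snd p \<le> s \<and> r < fst p} = {r<..} \<times> {..s}" by auto
  thus ?thesis by (simp add: pair_measureI)
qed

lemma sq_diff_integrable:
  fixes f g :: "real \<Rightarrow> real"
  assumes mf: "f \<in> borel_measurable Om" and mg: "g \<in> borel_measurable Om"
    and iF: "integrable Om (\<lambda>u. (f u)^2)" and iG: "integrable Om (\<lambda>u. (g u)^2)"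
  shows "integrable Om (\<lambda>u. (f u - g u)^2)"
proof (rule Bochner_Integration.integrable_bound[of _ "\<lambda>u. 2 * (f u)^2 + 2 * (g u)^2"])
  show "integrable Om (\<lambda>u. 2 * (f u)^2 + 2 * (g u)^2)" using iF iG by auto
  show "(\<lambda>u. (f u - g u)^2) \<in> borel_measurable Om" using mf mg by measurable
  show "AE u in Om. norm ((f u - g u)^2) \<le> norm (2 * (f u)^2 + 2 * (g u)^2)"
  proof (intro AE_I2)
    fix u
    have "0 \<le> (f u + g u)^2" by simp
    hence "(f u - g u)^2 \<le> 2 * (f u)^2 + 2 * (g u)^2"
      by (simp add: power2_eq_square algebra_simps)
    thus "norm ((f u - g u)^2) \<le> norm (2 * (f u)^2 + 2 * (g u)^2)"
      by simp
  qed
qed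

lemma iso:
  fixes f g :: "real \<Rightarrow> real"
  assumes mf: "mono_on {0<..<1} f" and mg: "mono_on {0<..<1} g"
    and iF: "integrable Om (\<lambda>u. (f u)^2)" and iG: "integrable Om (\<lambda>u. (g u)^2)"
  shows "(W2 (distr Om borel f) (distr Om borel g))^2 = (\<integral> u. (f u - g u)^2 \<partial>Om)"
proof -
  interpret Omp: prob_space Om by (rule prob_Om)
  define \<mu> where "\<mu> = distr Om borel f"
  define \<nu> where "\<nu> = distr Om borel g"
  define \<gamma>0 where "\<gamma>0 = distr Om (borel \<Otimes>\<^sub>M borel) (\<lambda>u. (f u, g u))"
  have fm[measurable]: "f \<in> borel_measurable Om" by (rule mono_meas_Om[OF mf])
  have gm[measurable]: "g \<in> borel_measurable Om" by (rule mono_meas_Om[OF mg])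
  have pm: "(\<lambda>u. (f u, g u)) \<in> measurable Om (borel \<Otimes>\<^sub>M borel)" by measurable
  have pmu: "prob_space \<mu>" unfolding \<mu>_def by (rule Omp.prob_space_distr) simp
  have g0c: "\<gamma>0 \<in> couplings \<mu> \<nu>"
    unfolding couplings_def \<gamma>0_def \<mu>_def \<nu>_def
    using pm by (simp add: distr_distr comp_def)
  have g0p: "prob_space \<gamma>0" unfolding \<gamma>0_def by (rule Omp.prob_space_distr[OF pm])
  have g0s: "sets \<gamma>0 = sets (borel \<Otimes>\<^sub>M borel)" unfolding \<gamma>0_def by simp
  have c0: "(\<integral>\<^sup>+ p. ennreal ((fst p - snd p)^2) \<partial>\<gamma>0) = (\<integral>\<^sup>+ u. ennreal ((f u - g u)^2) \<partial>Om)"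
    unfolding \<gamma>0_def using pm by (subst nn_integral_distr) auto
  have low: "(\<integral>\<^sup>+ p. ennreal ((fst p - snd p)^2) \<partial>\<gamma>0) \<le> (\<integral>\<^sup>+ p. ennreal ((fst p - snd p)^2) \<partial>\<gamma>)"
    if gc: "\<gamma> \<in> couplings \<mu> \<nu>" for \<gamma>
  proof -
    have gp: "prob_space \<gamma>" by (rule coupling_prob[OF gc pmu])
    have gs: "sets \<gamma> = sets (borel \<Otimes>\<^sub>M borel)" using gc by (simp add: couplings_def)
    have t1: "emeasure \<gamma>0 {p. fst p \<le> s \<and> r < snd p} \<le> emeasure \<gamma> {p. fst p \<le> s \<and> r < snd p}" for s r
    proof -
      have "emeasure \<gamma>0 {p. fst p \<le> s \<and> r < snd p} = emeasure Om {u\<in>space Om. f u \<le> s \<and> r < g u}"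
        unfolding \<gamma>0_def using pm set1
        by (subst emeasure_distr) (auto intro!: arg_cong2[where f=emeasure])
      also have "\<dots> = emeasure Om {u\<in>space Om. f u \<le> s} - emeasure Om {u\<in>space Om. g u \<le> r}"
        by (rule Om_core[OF mf mg])
      also have "\<dots> = emeasure \<mu> {..s} - emeasure \<nu> {..r}"
        unfolding \<mu>_def \<nu>_def
        by (subst (1 2) emeasure_distr) (auto simp: vimage_def Int_def conj_commute)
      also have "\<dots> \<le> emeasure \<gamma> {p. fst p \<le> s \<and> r < snd p}" by (rule coupling_lb[OF gc pmu])
      finally show ?thesis .
    qed
    have t2: "emeasure \<gamma>0 {p. snd p \<le> s \<and> r < fst p} \<le> emeasure \<gamma> {p. snd p \<le> s \<and> r < fst p}" for s r
    proof -
      have "emeasure \<gamma>0 {p. snd p \<le> s \<and> r < fst p} = emeasure Om {u\<in>space Om. g u \<le> s \<and> r < f u}"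
        unfolding \<gamma>0_def using pm set2
        by (subst emeasure_distr) (auto intro!: arg_cong2[where f=emeasure])
      also have "\<dots> = emeasure Om {u\<in>space Om. g u \<le> s} - emeasure Om {u\<in>space Om. f u \<le> r}"
        by (rule Om_core[OF mg mf])
      also have "\<dots> = emeasure \<nu> {..s} - emeasure \<mu> {..r}"
        unfolding \<mu>_def \<nu>_def
        by (subst (1 2) emeasure_distr) (auto simp: vimage_def Int_def conj_commute)
      also have "\<dots> \<le> emeasure \<gamma> {p. snd p \<le> s \<and> r < fst p}" by (rule coupling_lb2[OF gc pmu])
      finally show ?thesis .
    qed
    show ?thesis
      unfolding cost_layer[OF g0p g0s] cost_layer[OF gp gs]
      by (intro mult_left_mono nn_integral_mono) (auto intro: add_mono t1 t2)
  qed
  have INF: "(INF \<gamma>\<in>couplings \<mu> \<nu>. \<integral>\<^sup>+ p. ennreal ((fst p - snd p)^2) \<partial>\<gamma>) =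
      (\<integral>\<^sup>+ p. ennreal ((fst p - snd p)^2) \<partial>\<gamma>0)"
    by (intro antisym INF_lower[OF g0c] INF_greatest low)
  have ii: "integrable Om (\<lambda>u. (f u - g u)^2)" by (rule sq_diff_integrable[OF fm gm iF iG])
  have "(\<integral>\<^sup>+ u. ennreal ((f u - g u)^2) \<partial>Om) = ennreal (\<integral> u. (f u - g u)^2 \<partial>Om)"
    by (rule nn_integral_eq_integral[OF ii]) simp
  moreover have "0 \<le> (\<integral> u. (f u - g u)^2 \<partial>Om)" by simp
  ultimately show ?thesis
    unfolding W2_def \<mu>_def[symmetric] \<nu>_def[symmetric] INF c0 by simp
qed

lemma U2_rep:
  assumes "M \<in> U2"
  shows "\<exists>q. mono_on {0<..<1} q \<and> integrable Om (\<lambda>u. (q u)^2) \<and> M = distr Om borel q"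
proof -
  have P: "prob_space M" and S: "sets M = sets borel" and I: "integrable M (\<lambda>x. x^2)"
    using assms by (auto simp: U2_def)
  interpret cdf_distribution M
    by (simp add: cdf_distribution_def real_distribution_def real_distribution_axioms_def P S)
  define q where "q = (\<lambda>\<omega>. Inf {x. \<omega> \<le> cdf M x})"
  have mq: "mono_on {0<..<1} q" unfolding q_def by (rule mono_I)
  have D: "distr Om borel q = M" unfolding Om_def q_def by (rule distr_I_eq_M)
  have "integrable (distr Om borel q) (\<lambda>x. x^2)" using I D by simp
  hence "integrable Om (\<lambda>u. (q u)^2)"
    by (subst (asm) integrable_distr_eq) (auto intro: mono_meas_Om[OF mq])
  thus ?thesis using mq D by blast
qed

lemma rep_U2:
  assumes mq: "mono_on {0<..<1} q" and iq: "integrable Om (\<lambda>u. (q u)^2)"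
  shows "distr Om borel q \<in> U2"
proof -
  interpret prob_space Om by (rule prob_Om)
  have m: "q \<in> borel_measurable Om" by (rule mono_meas_Om[OF mq])
  have "integrable (distr Om borel q) (\<lambda>x. x^2)"
    using iq m by (subst integrable_distr_eq) auto
  thus ?thesis unfolding U2_def using m by (auto intro: prob_space_distr)
qed

lemma wsum_identity:
  fixes a y :: "nat \<Rightarrow> real"
  assumes "finite J" "(\<Sum>j\<in>J. a j) = 1"
  shows "(\<Sum>j\<in>J. a j * (x - y j)^2) = (x - (\<Sum>j\<in>J. a j * y j))^2 + (\<Sum>j\<in>J. a j * ((\<Sum>k\<in>J. a k * y k) - y j)^2)"
proof -
  define m where "m = (\<Sum>k\<in>J. a k * y k)"
  have gen: "(\<Sum>j\<in>J. a j * (z - y j)^2) = z^2 - 2 * z * m + (\<Sum>j\<in>J. a j * (y j)^2)" for z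
  proof -
    have "(\<Sum>j\<in>J. a j * (z - y j)^2) = (\<Sum>j\<in>J. z^2 * a j - 2 * z * (a j * y j) + a j * (y j)^2)"
      by (intro sum.cong) (auto simp: power2_eq_square algebra_simps)
    also have "\<dots> = z^2 * (\<Sum>j\<in>J. a j) - 2 * z * m + (\<Sum>j\<in>J. a j * (y j)^2)"
      by (simp add: sum.distrib sum_subtractf sum_distrib_left m_def)
    finally show ?thesis using assms(2) by simp
  qed
  show ?thesis unfolding m_def[symmetric] gen
    by (simp add: power2_eq_square algebra_simps)
qed

lemma wsum_nonneg_sq:
  fixes a y :: "nat \<Rightarrow> real"
  assumes "finite J" "(\<Sum>j\<in>J. a j) = 1" "\<And>j. j \<in> J \<Longrightarrow> 0 \<le> a j"
  shows "(\<Sum>j\<in>J. a j * y j)^2 \<le> (\<Sum>j\<in>J. a j * (y j)^2)"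
proof -
  have "(\<Sum>j\<in>J. a j * (0 - y j)^2) = (0 - (\<Sum>j\<in>J. a j * y j))^2 + (\<Sum>j\<in>J. a j * ((\<Sum>k\<in>J. a k * y k) - y j)^2)"
    by (rule wsum_identity[OF assms(1,2)])
  moreover have "0 \<le> (\<Sum>j\<in>J. a j * ((\<Sum>k\<in>J. a k * y k) - y j)^2)"
    using assms(3) by (intro sum_nonneg) auto
  ultimately show ?thesis by simp
qed

lemma bary:
  fixes J :: "nat set" and a :: "nat \<Rightarrow> real" and f :: "nat \<Rightarrow> real \<Rightarrow> real"
  assumes fin: "finite J" and apos: "\<And>j. j \<in> J \<Longrightarrow> 0 \<le> a j" and asum: "(\<Sum>j\<in>J. a j) = 1"
    and fm: "\<And>j. j \<in> J \<Longrightarrow> mono_on {0<..<1} (f j)"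
    and fi: "\<And>j. j \<in> J \<Longrightarrow> integrable Om (\<lambda>u. (f j u)^2)"
    and eta: "\<eta> \<in> U2"
    and mini: "\<And>\<xi>. \<xi> \<in> U2 \<Longrightarrow> (\<Sum>j\<in>J. a j * (W2 \<eta> (distr Om borel (f j)))^2) \<le> (\<Sum>j\<in>J. a j * (W2 \<xi> (distr Om borel (f j)))^2)"
  shows "\<eta> = distr Om borel (\<lambda>u. \<Sum>j\<in>J. a j * f j u)"
proof -
  interpret Omp: prob_space Om by (rule prob_Om)
  define qb where "qb = (\<lambda>u. \<Sum>j\<in>J. a j * f j u)"
  have fmeas[measurable]: "\<And>j. j \<in> J \<Longrightarrow> f j \<in> borel_measurable Om" using fm mono_meas_Om by blast
  have mqb: "mono_on {0<..<1} qb"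
    unfolding qb_def
  proof (intro mono_onI sum_mono mult_left_mono)
    fix r s j assume "r \<in> {0<..<1::real}" "s \<in> {0<..<1::real}" "r \<le> s" "j \<in> J"
    thus "f j r \<le> f j s" using fm[of j] by (auto intro: mono_onD)
    show "0 \<le> a j" using apos \<open>j \<in> J\<close> .
  qed
  have qbm[measurable]: "qb \<in> borel_measurable Om" by (rule mono_meas_Om[OF mqb])
  have iqb: "integrable Om (\<lambda>u. (qb u)^2)"
  proof (rule Bochner_Integration.integrable_bound[of _ "\<lambda>u. \<Sum>j\<in>J. a j * (f j u)^2"])
    show "integrable Om (\<lambda>u. \<Sum>j\<in>J. a j * (f j u)^2)" using fi by auto
    show "(\<lambda>u. (qb u)^2) \<in> borel_measurable Om" by measurable
    show "AE u in Om. norm ((qb u)^2) \<le> norm (\<Sum>j\<in>J. a j * (f j u)^2)"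
    proof (intro AE_I2)
      fix u
      have "(qb u)^2 \<le> (\<Sum>j\<in>J. a j * (f j u)^2)" unfolding qb_def
        by (rule wsum_nonneg_sq[OF fin asum apos])
      moreover have "0 \<le> (\<Sum>j\<in>J. a j * (f j u)^2)" using apos by (intro sum_nonneg) auto
      ultimately show "norm ((qb u)^2) \<le> norm (\<Sum>j\<in>J. a j * (f j u)^2)" by simp
    qed
  qed
  define R where "R = (\<integral> u. (\<Sum>j\<in>J. a j * (qb u - f j u)^2) \<partial>Om)"
  have Fval: "(\<Sum>j\<in>J. a j * (W2 (distr Om borel q) (distr Om borel (f j)))^2) = (\<integral> u. (q u - qb u)^2 \<partial>Om) + R"
    if mq: "mono_on {0<..<1} q" and iq: "integrable Om (\<lambda>u. (q u)^2)" for q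
  proof -
    have qm[measurable]: "q \<in> borel_measurable Om" by (rule mono_meas_Om[OF mq])
    have ij: "\<And>j. j \<in> J \<Longrightarrow> integrable Om (\<lambda>u. (q u - f j u)^2)"
      using sq_diff_integrable[OF qm fmeas iq fi] by blast
    have ij2: "\<And>j. j \<in> J \<Longrightarrow> integrable Om (\<lambda>u. (qb u - f j u)^2)"
      using sq_diff_integrable[OF qbm fmeas iqb fi] by blast
    have "(\<Sum>j\<in>J. a j * (W2 (distr Om borel q) (distr Om borel (f j)))^2) = (\<Sum>j\<in>J. a j * (\<integral> u. (q u - f j u)^2 \<partial>Om))"
      by (intro sum.cong refl) (simp add: iso[OF mq fm iq fi])
    also have "\<dots> = (\<integral> u. (\<Sum>j\<in>J. a j * (q u - f j u)^2) \<partial>Om)"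
      using Bochner_Integration.integral_sum[where I=J and M=Om and f="\<lambda>j u. a j * (q u - f j u)^2"] ij by simp
    also have "\<dots> = (\<integral> u. (q u - qb u)^2 + (\<Sum>j\<in>J. a j * (qb u - f j u)^2) \<partial>Om)"
      unfolding qb_def by (intro Bochner_Integration.integral_cong refl wsum_identity[OF fin asum])
    also have "\<dots> = (\<integral> u. (q u - qb u)^2 \<partial>Om) + R"
      unfolding R_def using ij2 sq_diff_integrable[OF qm qbm iq iqb]
      by (subst Bochner_Integration.integral_add) auto
    finally show ?thesis .
  qed
  obtain q where mq: "mono_on {0<..<1} q" and iq: "integrable Om (\<lambda>u. (q u)^2)" and eq: "\<eta> = distr Om borel q"
    using U2_rep[OF eta] by blast
  have qm[measurable]: "q \<in> borel_measurable Om" by (rule mono_meas_Om[OF mq])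
  have "(\<integral> u. (q u - qb u)^2 \<partial>Om) + R \<le> (\<integral> u. (qb u - qb u)^2 \<partial>Om) + R"
    using mini[OF rep_U2[OF mqb iqb]] unfolding Fval[OF mq iq, folded eq] Fval[OF mqb iqb] by simp
  hence "(\<integral> u. (q u - qb u)^2 \<partial>Om) = 0"
    by (simp add: antisym)
  hence "AE u in Om. (q u - qb u)^2 = 0"
    using integral_nonneg_eq_0_iff_AE[OF sq_diff_integrable[OF qm qbm iq iqb]] by simp
  hence "AE u in Om. q u = qb u" by auto
  hence "distr Om borel q = distr Om borel qb" by (intro distr_cong_AE) auto
  thus ?thesis unfolding eq qb_def by simp
qed



definition avg :: "nat \<Rightarrow> (nat \<Rightarrow> real) \<Rightarrow> real" where
  "avg n x = (\<Sum>k<n. x k) / real n"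
definition Vn :: "nat \<Rightarrow> (nat \<Rightarrow> real) \<Rightarrow> real" where
  "Vn n x = (\<Sum>i<n. (x i - avg n x)^2)"
definition Wm :: "nat \<Rightarrow> (nat \<Rightarrow> nat \<Rightarrow> real) \<Rightarrow> (nat \<Rightarrow> real) \<Rightarrow> nat \<Rightarrow> real" where
  "Wm n w x = (\<lambda>i. \<Sum>j<n. w i j * x j)"

lemma path_bound:
  fixes x :: "nat \<Rightarrow> real"
  assumes edge: "\<And>a b. R a b \<Longrightarrow> \<bar>x a - x b\<bar> \<le> c"
  shows "(R ^^ m) i k \<Longrightarrow> \<bar>x i - x k\<bar> \<le> real m * c"
proof (induction m arbitrary: k)
  case 0 thus ?case by simp
next
  case (Suc m)
  from Suc.prems obtain y where y1: "(R ^^ m) i y" and y2: "R y k" by (rule relpowp_Suc_E)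
  have "\<bar>x i - x k\<bar> \<le> \<bar>x i - x y\<bar> + \<bar>x y - x k\<bar>" by simp
  also have "\<dots> \<le> real m * c + c" using Suc.IH[OF y1] edge[OF y2] by simp
  finally show ?case by (simp add: algebra_simps)
qed

lemma avg_Wm:
  assumes col: "\<And>j. j < n \<Longrightarrow> (\<Sum>i<n. w i j) = 1"
  shows "avg n (Wm n w x) = avg n x"
proof -
  have "(\<Sum>i<n. \<Sum>j<n. w i j * x j) = (\<Sum>j<n. \<Sum>i<n. w i j * x j)" by (rule sum.swap)
  also have "\<dots> = (\<Sum>j<n. x j)"
    by (intro sum.cong refl) (simp add: sum_distrib_right[symmetric] col)
  finally show ?thesis by (simp add: avg_def Wm_def)
qed

lemma Vn_nonneg: "0 \<le> Vn n x" unfolding Vn_def by (intro sum_nonneg) auto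

lemma la_contract:
  fixes n :: nat and E :: "nat \<Rightarrow> nat \<Rightarrow> bool" and w :: "nat \<Rightarrow> nat \<Rightarrow> real"
  assumes npos: "0 < n"
    and self_loop: "\<And>i. i < n \<Longrightarrow> E i i"
    and connected: "\<And>i j. i < n \<Longrightarrow> j < n \<Longrightarrow> (\<lambda>a b. a < n \<and> b < n \<and> E a b)\<^sup>*\<^sup>* i j"
    and w_pos: "\<And>i j. i < n \<Longrightarrow> j < n \<Longrightarrow> (w i j > 0 \<longleftrightarrow> E i j)"
    and w_zero: "\<And>i j. i < n \<Longrightarrow> j < n \<Longrightarrow> \<not> E i j \<Longrightarrow> w i j = 0"
    and row_stoch: "\<And>i. i < n \<Longrightarrow> (\<Sum>j<n. w i j) = 1"
    and col_stoch: "\<And>j. j < n \<Longrightarrow> (\<Sum>i<n. w i j) = 1"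
  shows "\<exists>lam. 0 < lam \<and> lam < 1 \<and> (\<forall>x. Vn n (Wm n w x) \<le> lam * Vn n x)"
proof -
  define R where "R = (\<lambda>a b. a < n \<and> b < n \<and> E a b)"
  have wnn: "\<And>i j. i < n \<Longrightarrow> j < n \<Longrightarrow> 0 \<le> w i j"
    using w_pos w_zero by (metis less_eq_real_def)
  define M where "M = (\<lambda>i k. SOME m. (R ^^ m) i k)"
  have Mp: "(R ^^ M i k) i k" if "i < n" "k < n" for i k
    using connected[OF that] unfolding M_def R_def[symmetric] rtranclp_power by (rule someI_ex)
  define L where "L = (\<Sum>i<n. \<Sum>k<n. M i k)"
  have MleL: "M i k \<le> L" if "i < n" "k < n" for i k
  proof -
    have "M i k \<le> (\<Sum>k<n. M i k)" using that by (intro member_le_sum) auto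
    also have "\<dots> \<le> L" unfolding L_def using that by (intro member_le_sum[of i "{..<n}" "\<lambda>i. \<Sum>k<n. M i k"]) auto
    finally show ?thesis .
  qed
  define Dset where "Dset = (\<lambda>(i,j). w i j) ` {p \<in> {..<n} \<times> {..<n}. E (fst p) (snd p)}"
  have Dfin: "finite Dset" unfolding Dset_def by auto
  have Dne: "Dset \<noteq> {}" unfolding Dset_def using self_loop[OF npos] npos by auto
  define \<delta> where "\<delta> = Min Dset"
  have dpos: "0 < \<delta>" unfolding \<delta>_def using Dfin Dne w_pos by (auto simp: Dset_def)
  have dle: "\<delta> \<le> w i j" if "i < n" "j < n" "E i j" for i j
    unfolding \<delta>_def using Dfin that by (intro Min_le) (auto simp: Dset_def image_iff)
  define S where "S = (\<lambda>x::nat\<Rightarrow>real. \<Sum>i<n. \<Sum>j<n. (if E i j then (x i - x j)^2 else 0))"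
  have Snn: "0 \<le> S x" for x unfolding S_def by (intro sum_nonneg) auto
  define K where "K = real n * (real L)^2 + 1"
  have Kpos: "0 < K" unfolding K_def by (simp add: add_nonneg_pos)
  have poinc: "Vn n x \<le> K * S x" for x
  proof -
    have edge: "\<bar>x a - x b\<bar> \<le> sqrt (S x)" if "R a b" for a b
    proof -
      have ab: "a < n" "b < n" "E a b" using that by (auto simp: R_def)
      have "(x a - x b)^2 \<le> (\<Sum>j<n. (if E a j then (x a - x j)^2 else 0))"
        using member_le_sum[of b "{..<n}" "\<lambda>j. (if E a j then (x a - x j)^2 else 0)"] ab by auto
      also have "\<dots> \<le> S x"
      proof -
        have nn: "\<And>i. 0 \<le> (\<Sum>j<n. (if E i j then (x i - x j)^2 else 0))" by (intro sum_nonneg) auto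
        show ?thesis unfolding S_def
          by (rule member_le_sum[of a "{..<n}" "\<lambda>i. \<Sum>j<n. (if E i j then (x i - x j)^2 else 0)"]) (use ab nn in auto)
      qed
      finally show ?thesis using real_sqrt_le_mono[of "(x a - x b)^2" "S x"] by simp
    qed
    have pair: "(x i - x k)^2 \<le> (real L)^2 * S x" if "i < n" "k < n" for i k
    proof -
      have "\<bar>x i - x k\<bar> \<le> real (M i k) * sqrt (S x)"
        by (rule path_bound[OF edge Mp[OF that]])
      also have "\<dots> \<le> real L * sqrt (S x)" using MleL[OF that] Snn[of x] by (intro mult_right_mono) auto
      finally have "\<bar>x i - x k\<bar>^2 \<le> (real L * sqrt (S x))^2"
        by (intro power_mono) auto
      thus ?thesis using Snn[of x] by (simp add: power_mult_distrib)
    qed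
    have each: "(x i - avg n x)^2 \<le> (real L)^2 * S x" if "i < n" for i
    proof -
      have "x i - avg n x = (\<Sum>k<n. (1 / real n) * (x i - x k))"
        using npos by (simp add: avg_def sum_subtractf sum_divide_distrib[symmetric] field_simps)
      hence "(x i - avg n x)^2 \<le> (\<Sum>k<n. (1 / real n) * (x i - x k)^2)"
        using wsum_nonneg_sq[of "{..<n}" "\<lambda>_. 1 / real n" "\<lambda>k. x i - x k"] npos by simp
      also have "\<dots> \<le> (\<Sum>k<n. (1 / real n) * ((real L)^2 * S x))"
        using pair[OF that] by (intro sum_mono mult_left_mono) auto
      also have "\<dots> = (real L)^2 * S x" using npos by simp
      finally show ?thesis .
    qed
    have "Vn n x \<le> (\<Sum>i<n. (real L)^2 * S x)" unfolding Vn_def using each by (intro sum_mono) auto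
    also have "\<dots> = real n * (real L)^2 * S x" by simp
    also have "\<dots> \<le> K * S x" unfolding K_def using Snn[of x] by (simp add: algebra_simps)
    finally show ?thesis .
  qed
  have decr: "Vn n (Wm n w x) \<le> Vn n x - \<delta> / (2 * real n) * S x" for x
  proof -
    define y where "y = (\<lambda>j. x j - avg n x)"
    define m where "m = (\<lambda>i. \<Sum>k<n. w i k * y k)"
    define B where "B = (\<lambda>i. \<Sum>j<n. w i j * (m i - y j)^2)"
    have Wy: "Wm n w x i - avg n (Wm n w x) = m i" if "i < n" for i
    proof -
      have "m i = (\<Sum>k<n. w i k * x k) - (\<Sum>k<n. w i k) * avg n x"
        by (simp add: m_def y_def algebra_simps sum_subtractf sum_distrib_right sum_distrib_left)
      thus ?thesis using row_stoch[OF that] avg_Wm[OF col_stoch] by (simp add: Wm_def)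
    qed
    have idB: "(\<Sum>j<n. w i j * (y j)^2) = (m i)^2 + B i" if "i < n" for i
      using wsum_identity[of "{..<n}" "w i" 0 y] row_stoch[OF that]
      by (simp add: m_def B_def)
    have "Vn n (Wm n w x) = (\<Sum>i<n. (m i)^2)" unfolding Vn_def using Wy by simp
    also have "\<dots> = (\<Sum>i<n. \<Sum>j<n. w i j * (y j)^2) - (\<Sum>i<n. B i)"
      using idB by (simp add: sum_subtractf[symmetric])
    also have "(\<Sum>i<n. \<Sum>j<n. w i j * (y j)^2) = Vn n x"
    proof -
      have "(\<Sum>i<n. \<Sum>j<n. w i j * (y j)^2) = (\<Sum>j<n. \<Sum>i<n. w i j * (y j)^2)" by (rule sum.swap)
      also have "\<dots> = (\<Sum>j<n. (y j)^2)"
        by (intro sum.cong refl) (simp add: sum_distrib_right[symmetric] col_stoch)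
      finally show ?thesis by (simp add: Vn_def y_def)
    qed
    finally have e1: "Vn n (Wm n w x) = Vn n x - (\<Sum>i<n. B i)" .
    have Bnn: "0 \<le> B i" if "i < n" for i unfolding B_def using wnn that by (intro sum_nonneg) auto
    have Bge: "\<delta> / 2 * (x i - x j)^2 \<le> B i" if "i < n" "j < n" "E i j" for i j
    proof (cases "i = j")
      case True thus ?thesis using Bnn[OF that(1)] by simp
    next
      case False
      have "w i i * (m i - y i)^2 + w i j * (m i - y j)^2 = (\<Sum>k\<in>{i,j}. w i k * (m i - y k)^2)"
        using False by simp
      also have "\<dots> \<le> B i" unfolding B_def using that wnn
        by (intro sum_mono2) auto
      finally have b1: "w i i * (m i - y i)^2 + w i j * (m i - y j)^2 \<le> B i" .
      have "\<delta> * (m i - y i)^2 + \<delta> * (m i - y j)^2 \<le> w i i * (m i - y i)^2 + w i j * (m i - y j)^2"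
        using dle[OF that(1) that(1) self_loop[OF that(1)]] dle[OF that]
        by (intro add_mono mult_right_mono) auto
      moreover have sq2: "(x i - x j)^2 \<le> 2 * (m i - y i)^2 + 2 * (m i - y j)^2"
      proof -
        have xe: "x i - x j = (m i - y j) - (m i - y i)" by (simp add: y_def)
        have gen: "(a - b)^2 \<le> 2 * a^2 + 2 * b^2" for a b :: real
        proof -
          have "0 \<le> (a + b)^2" by simp
          thus ?thesis by (simp add: power2_eq_square algebra_simps)
        qed
        show ?thesis unfolding xe using gen[of "m i - y j" "m i - y i"] by simp
      qed
      moreover have "\<delta> / 2 * (x i - x j)^2 \<le> \<delta> * (m i - y i)^2 + \<delta> * (m i - y j)^2"
      proof -
        note h = sq2
        have "\<delta> / 2 * (x i - x j)^2 \<le> \<delta> / 2 * (2 * (m i - y i)^2 + 2 * (m i - y j)^2)"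
          using h dpos by (intro mult_left_mono) auto
        thus ?thesis by (simp add: algebra_simps)
      qed
      ultimately show ?thesis using b1 by linarith
    qed
    have rowb: "(\<Sum>j<n. (if E i j then \<delta> / 2 * (x i - x j)^2 else 0)) \<le> real n * B i" if "i < n" for i
    proof -
      have "(\<Sum>j<n. (if E i j then \<delta> / 2 * (x i - x j)^2 else 0)) \<le> (\<Sum>j<n. B i)"
        using Bge[OF that] Bnn[OF that] by (intro sum_mono) auto
      thus ?thesis by simp
    qed
    have "\<delta> / 2 * S x = (\<Sum>i<n. \<Sum>j<n. (if E i j then \<delta> / 2 * (x i - x j)^2 else 0))"
      unfolding S_def by (simp add: sum_distrib_left if_distrib cong: if_cong)
    also have "\<dots> \<le> (\<Sum>i<n. real n * B i)" using rowb by (intro sum_mono) auto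
    also have "\<dots> = real n * (\<Sum>i<n. B i)" by (simp add: sum_distrib_left)
    finally have "\<delta> / 2 * S x \<le> real n * (\<Sum>i<n. B i)" .
    hence "\<delta> / (2 * real n) * S x \<le> (\<Sum>i<n. B i)"
      using npos by (simp add: field_simps)
    thus ?thesis using e1 by linarith
  qed
  define c where "c = \<delta> / (2 * real n * K)"
  have cpos: "0 < c" unfolding c_def using dpos npos Kpos by simp
  define lam where "lam = max (1/2) (1 - c)"
  have "Vn n (Wm n w x) \<le> lam * Vn n x" for x
  proof -
    have "c * Vn n x \<le> \<delta> / (2 * real n) * S x"
    proof -
      have "c * Vn n x \<le> c * (K * S x)" using poinc[of x] cpos by (intro mult_left_mono) auto
      also have "\<dots> = \<delta> / (2 * real n) * S x" unfolding c_def using Kpos by (simp add: field_simps)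
      finally show ?thesis .
    qed
    hence "Vn n (Wm n w x) \<le> (1 - c) * Vn n x" using decr[of x] by (simp add: algebra_simps)
    also have "\<dots> \<le> lam * Vn n x" unfolding lam_def using Vn_nonneg by (intro mult_right_mono) auto
    finally show ?thesis .
  qed
  moreover have "0 < lam" "lam < 1" unfolding lam_def using cpos by auto
  ultimately show ?thesis by blast
qed



lemma wavg_good:
  fixes J :: "nat set" and a :: "nat \<Rightarrow> real" and f :: "nat \<Rightarrow> real \<Rightarrow> real"
  assumes fin: "finite J" and apos: "\<And>j. j \<in> J \<Longrightarrow> 0 \<le> a j" and asum: "(\<Sum>j\<in>J. a j) = 1"
    and fm: "\<And>j. j \<in> J \<Longrightarrow> mono_on {0<..<1} (f j)"
    and fi: "\<And>j. j \<in> J \<Longrightarrow> integrable Om (\<lambda>u. (f j u)^2)"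
  shows "mono_on {0<..<1} (\<lambda>u. \<Sum>j\<in>J. a j * f j u) \<and> integrable Om (\<lambda>u. (\<Sum>j\<in>J. a j * f j u)^2)"
proof -
  define qb where "qb = (\<lambda>u. \<Sum>j\<in>J. a j * f j u)"
  have fmeas[measurable]: "\<And>j. j \<in> J \<Longrightarrow> f j \<in> borel_measurable Om" using fm mono_meas_Om by blast
  have mqb: "mono_on {0<..<1} qb"
    unfolding qb_def
  proof (intro mono_onI sum_mono mult_left_mono)
    fix r s j assume "r \<in> {0<..<1::real}" "s \<in> {0<..<1::real}" "r \<le> s" "j \<in> J"
    thus "f j r \<le> f j s" using fm[of j] by (auto intro: mono_onD)
    show "0 \<le> a j" using apos \<open>j \<in> J\<close> .
  qed
  have qbm[measurable]: "qb \<in> borel_measurable Om" by (rule mono_meas_Om[OF mqb])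
  have iqb: "integrable Om (\<lambda>u. (qb u)^2)"
  proof (rule Bochner_Integration.integrable_bound[of _ "\<lambda>u. \<Sum>j\<in>J. a j * (f j u)^2"])
    show "integrable Om (\<lambda>u. \<Sum>j\<in>J. a j * (f j u)^2)" using fi by auto
    show "(\<lambda>u. (qb u)^2) \<in> borel_measurable Om" by measurable
    show "AE u in Om. norm ((qb u)^2) \<le> norm (\<Sum>j\<in>J. a j * (f j u)^2)"
    proof (intro AE_I2)
      fix u
      have "(qb u)^2 \<le> (\<Sum>j\<in>J. a j * (f j u)^2)" unfolding qb_def
        by (rule wsum_nonneg_sq[OF fin asum apos])
      moreover have "0 \<le> (\<Sum>j\<in>J. a j * (f j u)^2)" using apos by (intro sum_nonneg) auto
      ultimately show "norm ((qb u)^2) \<le> norm (\<Sum>j\<in>J. a j * (f j u)^2)" by simp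
    qed
  qed
  show ?thesis using mqb iqb unfolding qb_def by simp
qed

theorem corollary2:
  fixes n :: nat
    and E :: "nat \<Rightarrow> nat \<Rightarrow> bool"
    and w :: "nat \<Rightarrow> nat \<Rightarrow> real"
    and \<mu> :: "nat \<Rightarrow> nat \<Rightarrow> real measure"
    and \<mu>star :: "real measure"
  defines "N \<equiv> (\<lambda>i. {j. j < n \<and> E i j})"
  assumes sym: "\<And>i j. i < n \<Longrightarrow> j < n \<Longrightarrow> E i j \<longleftrightarrow> E j i"
    and self_loop: "\<And>i. i < n \<Longrightarrow> E i i"
    and connected: "\<And>i j. i < n \<Longrightarrow> j < n \<Longrightarrow>
        (\<lambda>a b. a < n \<and> b < n \<and> E a b)\<^sup>*\<^sup>* i j"
    and w_pos: "\<And>i j. i < n \<Longrightarrow> j < n \<Longrightarrow> (w i j > 0 \<longleftrightarrow> E i j)"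
    and w_zero: "\<And>i j. i < n \<Longrightarrow> j < n \<Longrightarrow> \<not> E i j \<Longrightarrow> w i j = 0"
    and w_diag: "\<And>i. i < n \<Longrightarrow> w i i > 0"
    and row_stoch: "\<And>i. i < n \<Longrightarrow> (\<Sum>j<n. w i j) = 1"
    and col_stoch: "\<And>j. j < n \<Longrightarrow> (\<Sum>i<n. w i j) = 1"
    and init: "\<And>i. i < n \<Longrightarrow> \<mu> i 0 \<in> U2"
    and update: "\<And>i t. i < n \<Longrightarrow>
        is_argmin_U2 (\<lambda>\<eta>. \<Sum>j\<in>N i. w i j * (W2 \<eta> (\<mu> j t))\<^sup>2) (\<mu> i (Suc t))"
    and barycenter: "is_argmin_U2 (\<lambda>\<eta>. (1 / real n) * (\<Sum>j<n. (W2 \<eta> (\<mu> j 0))\<^sup>2)) \<mu>star"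
  shows "\<forall>i<n. \<exists>C>0. \<exists>\<rho>. 0 < \<rho> \<and> \<rho> < 1 \<and> (\<forall>t. W2 (\<mu> i t) \<mu>star \<le> C * \<rho> ^ t)"
proof (cases "n = 0")
  case True thus ?thesis by simp
next
  case False
  hence npos: "0 < n" by simp
  have wnn: "\<And>i j. i < n \<Longrightarrow> j < n \<Longrightarrow> 0 \<le> w i j"
    using w_pos w_zero by (metis less_eq_real_def)
  define Q where "Q = (\<lambda>i. SOME q. mono_on {0<..<1} q \<and> integrable Om (\<lambda>u. (q u)^2) \<and> \<mu> i 0 = distr Om borel q)"
  have Qp: "mono_on {0<..<1} (Q i) \<and> integrable Om (\<lambda>u. (Q i u)^2) \<and> \<mu> i 0 = distr Om borel (Q i)" if "i < n" for i
    unfolding Q_def using U2_rep[OF init[OF that]] by (rule someI_ex)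
  define X where "X = rec_nat Q (\<lambda>t Xt i u. \<Sum>j<n. w i j * Xt j u)"
  have X0: "X 0 = Q" unfolding X_def by simp
  have XS: "X (Suc t) i u = (\<Sum>j<n. w i j * X t j u)" for t i u unfolding X_def by simp
  have Nfin: "finite (N i)" for i unfolding N_def by auto
  have Nsum: "(\<Sum>j\<in>N i. w i j * g j) = (\<Sum>j<n. w i j * g j)" if "i < n" for i and g :: "nat \<Rightarrow> real"
    unfolding N_def using that w_zero by (intro sum.mono_neutral_left) auto
  have inv: "\<forall>i<n. mono_on {0<..<1} (X t i) \<and> integrable Om (\<lambda>u. (X t i u)^2) \<and> \<mu> i t = distr Om borel (X t i)" for t
  proof (induction t)
    case 0 thus ?case using Qp by (simp add: X0)
  next
    case (Suc t)
    show ?case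
    proof (intro allI impI)
      fix i assume i: "i < n"
      have good: "mono_on {0<..<1} (\<lambda>u. \<Sum>j<n. w i j * X t j u) \<and> integrable Om (\<lambda>u. (\<Sum>j<n. w i j * X t j u)^2)"
        using Suc.IH wnn[OF i] row_stoch[OF i] by (intro wavg_good) auto
      have am: "is_argmin_U2 (\<lambda>\<eta>. \<Sum>j\<in>N i. w i j * (W2 \<eta> (\<mu> j t))\<^sup>2) (\<mu> i (Suc t))" by (rule update[OF i])
      have Nlt: "\<And>j. j \<in> N i \<Longrightarrow> j < n" unfolding N_def by auto
      have "\<mu> i (Suc t) = distr Om borel (\<lambda>u. \<Sum>j\<in>N i. w i j * X t j u)"
      proof (rule bary[OF Nfin])
        show "\<And>j. j \<in> N i \<Longrightarrow> 0 \<le> w i j" using wnn[OF i] Nlt by auto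
        show "(\<Sum>j\<in>N i. w i j) = 1" using Nsum[OF i, of "\<lambda>_. 1"] row_stoch[OF i] by simp
        show "\<And>j. j \<in> N i \<Longrightarrow> mono_on {0<..<1} (X t j)" using Suc.IH Nlt by auto
        show "\<And>j. j \<in> N i \<Longrightarrow> integrable Om (\<lambda>u. (X t j u)^2)" using Suc.IH Nlt by auto
        show "\<mu> i (Suc t) \<in> U2" using am by (simp add: is_argmin_U2_def)
        fix \<xi> assume "\<xi> \<in> U2"
        hence "(\<Sum>j\<in>N i. w i j * (W2 (\<mu> i (Suc t)) (\<mu> j t))\<^sup>2) \<le> (\<Sum>j\<in>N i. w i j * (W2 \<xi> (\<mu> j t))\<^sup>2)"
          using am by (simp add: is_argmin_U2_def)
        moreover have "\<And>j. j \<in> N i \<Longrightarrow> \<mu> j t = distr Om borel (X t j)" using Suc.IH Nlt by auto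
        ultimately show "(\<Sum>j\<in>N i. w i j * (W2 (\<mu> i (Suc t)) (distr Om borel (X t j)))\<^sup>2) \<le> (\<Sum>j\<in>N i. w i j * (W2 \<xi> (distr Om borel (X t j)))\<^sup>2)"
          by (metis (no_types, lifting) sum.cong)
      qed
      also have "(\<lambda>u. \<Sum>j\<in>N i. w i j * X t j u) = X (Suc t) i"
        using Nsum[OF i] by (simp add: XS fun_eq_iff)
      finally show "mono_on {0<..<1} (X (Suc t) i) \<and> integrable Om (\<lambda>u. (X (Suc t) i u)^2) \<and> \<mu> i (Suc t) = distr Om borel (X (Suc t) i)"
        using good by (simp add: XS[symmetric] fun_eq_iff)
    qed
  qed
  define Xs where "Xs = (\<lambda>u. \<Sum>j<n. 1 / real n * X 0 j u)"
  have goods: "mono_on {0<..<1} Xs \<and> integrable Om (\<lambda>u. (Xs u)^2)"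
    unfolding Xs_def using inv[of 0] npos by (intro wavg_good) auto
  have star: "\<mu>star = distr Om borel Xs"
    unfolding Xs_def
  proof (rule bary)
    show "(\<Sum>j<n. 1 / real n) = 1" using npos by simp
    show "\<mu>star \<in> U2" using barycenter by (simp add: is_argmin_U2_def)
    fix \<xi> assume "\<xi> \<in> U2"
    hence "(1 / real n) * (\<Sum>j<n. (W2 \<mu>star (\<mu> j 0))\<^sup>2) \<le> (1 / real n) * (\<Sum>j<n. (W2 \<xi> (\<mu> j 0))\<^sup>2)"
      using barycenter by (simp add: is_argmin_U2_def)
    moreover have "\<And>j. j < n \<Longrightarrow> \<mu> j 0 = distr Om borel (X 0 j)" using inv[of 0] by auto
    ultimately show "(\<Sum>j<n. 1 / real n * (W2 \<mu>star (distr Om borel (X 0 j)))\<^sup>2) \<le> (\<Sum>j<n. 1 / real n * (W2 \<xi> (distr Om borel (X 0 j)))\<^sup>2)"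
      by (simp add: sum_divide_distrib[symmetric])
  qed (use inv[of 0] in auto)
  obtain lam where lam0: "0 < lam" and lam1: "lam < 1" and lamc: "\<And>x. Vn n (Wm n w x) \<le> lam * Vn n x"
    using la_contract[OF npos self_loop connected w_pos w_zero row_stoch col_stoch] by blast
  have Xm: "\<And>t j. j < n \<Longrightarrow> X t j \<in> borel_measurable Om" using inv mono_meas_Om by blast
  have Xsm: "Xs \<in> borel_measurable Om" using goods mono_meas_Om by blast
  have avgX: "avg n (\<lambda>j. X t j u) = Xs u" for t u
  proof (induction t)
    case 0 thus ?case unfolding Xs_def avg_def by (simp add: sum_divide_distrib)
  next
    case (Suc t)
    have "(\<lambda>j. X (Suc t) j u) = Wm n w (\<lambda>j. X t j u)" by (simp add: XS Wm_def fun_eq_iff)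
    thus ?case using avg_Wm[OF col_stoch] Suc.IH by simp
  qed
  define V0 where "V0 = (\<lambda>u. Vn n (\<lambda>j. X 0 j u))"
  have Vdec: "Vn n (\<lambda>j. X t j u) \<le> lam ^ t * V0 u" for t u
  proof (induction t)
    case 0 thus ?case by (simp add: V0_def)
  next
    case (Suc t)
    have "(\<lambda>j. X (Suc t) j u) = Wm n w (\<lambda>j. X t j u)" by (simp add: XS Wm_def fun_eq_iff)
    hence "Vn n (\<lambda>j. X (Suc t) j u) \<le> lam * Vn n (\<lambda>j. X t j u)" using lamc by simp
    also have "\<dots> \<le> lam * (lam ^ t * V0 u)" using Suc.IH lam0 by (intro mult_left_mono) auto
    finally show ?case by simp
  qed
  have V0eq: "V0 = (\<lambda>u. \<Sum>i<n. (X 0 i u - Xs u)^2)"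
    unfolding V0_def Vn_def using avgX[of 0] by simp
  have iV0: "integrable Om V0"
    unfolding V0eq using inv[of 0] goods Xm Xsm by (intro Bochner_Integration.integrable_sum sq_diff_integrable) auto
  define I0 where "I0 = (\<integral> u. V0 u \<partial>Om)"
  have I0nn: "0 \<le> I0" unfolding I0_def V0_def using Vn_nonneg by simp
  show ?thesis
  proof (intro allI impI)
    fix i assume i: "i < n"
    have bound: "W2 (\<mu> i t) \<mu>star \<le> sqrt I0 * sqrt lam ^ t" for t
    proof -
      have gi: "mono_on {0<..<1} (X t i)" "integrable Om (\<lambda>u. (X t i u)^2)" "\<mu> i t = distr Om borel (X t i)"
        using inv[of t] i by auto
      have sq: "(W2 (\<mu> i t) \<mu>star)^2 = (\<integral> u. (X t i u - Xs u)^2 \<partial>Om)"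
        unfolding gi(3) star using iso[OF gi(1) _ gi(2)] goods by simp
      have pt: "(X t i u - Xs u)^2 \<le> lam ^ t * V0 u" for u
      proof -
        have "(X t i u - Xs u)^2 \<le> Vn n (\<lambda>j. X t j u)"
          unfolding Vn_def avgX using i by (intro member_le_sum[of i "{..<n}" "\<lambda>j. (X t j u - Xs u)^2"]) auto
        thus ?thesis using Vdec[of t u] by simp
      qed
      have "(\<integral> u. (X t i u - Xs u)^2 \<partial>Om) \<le> (\<integral> u. lam ^ t * V0 u \<partial>Om)"
        using pt iV0 sq_diff_integrable[OF Xm[OF i] Xsm gi(2)] goods by (intro integral_mono) auto
      also have "\<dots> = lam ^ t * I0" unfolding I0_def by simp
      finally have "(W2 (\<mu> i t) \<mu>star)^2 \<le> lam ^ t * I0" using sq by simp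
      hence "sqrt ((W2 (\<mu> i t) \<mu>star)^2) \<le> sqrt (lam ^ t * I0)" by (rule real_sqrt_le_mono)
      moreover have "0 \<le> W2 (\<mu> i t) \<mu>star" by (simp add: W2_def)
      ultimately show ?thesis by (simp add: real_sqrt_mult real_sqrt_power mult.commute)
    qed
    show "\<exists>C>0. \<exists>\<rho>. 0 < \<rho> \<and> \<rho> < 1 \<and> (\<forall>t. W2 (\<mu> i t) \<mu>star \<le> C * \<rho> ^ t)"
    proof (intro exI conjI allI)
      show "0 < sqrt I0 + 1" using I0nn by (simp add: add_nonneg_pos)
      show "0 < sqrt lam" using lam0 by simp
      show "sqrt lam < 1" using lam1 lam0 by simp
      fix t
      have "W2 (\<mu> i t) \<mu>star \<le> sqrt I0 * sqrt lam ^ t" by (rule bound)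
      also have "\<dots> \<le> (sqrt I0 + 1) * sqrt lam ^ t" using lam0 by (intro mult_right_mono) auto
      finally show "W2 (\<mu> i t) \<mu>star \<le> (sqrt I0 + 1) * sqrt lam ^ t" .
    qed
  qed
qed


end
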